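(* Let $b\in(0,\frac16)$, let $G$ and $v_{\max}$ be as below, and let $u_-,u_+\in[-1,1]$ with $u_->v_{\max}$ and $u_+<-v_{\max}$. Then the upper concave envelope $G_\frown$ of $G$ on $[u_+,u_-]$ equals $G$ on $[u_+,-v_{\max}]\cup[v_{\max},u_-]$ and equals the constant $G(v_{\max})$ on $[-v_{\max},v_{\max}]$. Consequently, the entropy solution $u(x,t)$ of the Riemann problem $\partial_tu+\partial_xG(u)=0$, $u(x,0)=u_-$ for $x\le0$, $u(x,0)=u_+$ for $x>0$, consists of a rarefaction fan, a stationary shock at $x=0$, and a rarefaction fan, with $\lim_{x\to0^-}u(x,t)=v_{\max}$ and $\lim_{x\to0^+}u(x,t)=-v_{\max}$ for every $t>0$; in particular the jump at $0$ is $-2v_{\max}$.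
   Context: $G(v)=-\frac{v^2}{2}+\frac{4b^2+(1-2b)^2v^2}{2(4b^2+(1-2b)\sqrt{4b^2+(1-4b)v^2})}$ on $[-1,1]$ and $v_{\max}=\frac12\sqrt{\frac{(1+2b)(1-6b)}{1-4b}}$ (the positive global maximum point of $G$). The upper concave envelope of $G$ on an interval $I$ is the smallest concave function on $I$ that is $\ge G$ on $I$. For $u_->u_+$, the entropy solution of the Riemann problem is given by: $u(x,t)=u_-$ if $x\le (G_\frown)'(u_-)t$; $u(x,t)=[(G_\frown)']^{-1}(x/t)$ if $(G_\frown)'(u_-)t<x\le (G_\frown)'(u_+)t$; $u(x,t)=u_+$ if $x>(G_\frown)'(u_+)t$, where $G_\frown$ is the upper concave envelope of $G$ on $[u_+,u_-]$. *)

theory Defs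
  imports "HOL-Analysis.Analysis"
begin

definition Gf :: "real \<Rightarrow> real \<Rightarrow> real" where
  "Gf b v = - v\<^sup>2 / 2 + (4*b\<^sup>2 + (1 - 2*b)\<^sup>2 * v\<^sup>2) /
     (2 * (4*b\<^sup>2 + (1 - 2*b) * sqrt (4*b\<^sup>2 + (1 - 4*b) * v\<^sup>2)))"

definition vmax :: "real \<Rightarrow> real" where
  "vmax b = (1/2) * sqrt ((1 + 2*b) * (1 - 6*b) / (1 - 4*b))"

text \<open>Only its values on I are meaningful.\<close>
definition upper_concave_envelope :: "real set \<Rightarrow> (real \<Rightarrow> real) \<Rightarrow> real \<Rightarrow> real" where
  "upper_concave_envelope I g = (\<lambda>v. Inf {h v | h. concave_on I h \<and> (\<forall>x\<in>I. g x \<le> h x)})"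

definition deriv_within :: "real set \<Rightarrow> (real \<Rightarrow> real) \<Rightarrow> real \<Rightarrow> real" where
  "deriv_within I f v = (SOME D. (f has_real_derivative D) (at v within I))"

definition riemann_solution :: "(real \<Rightarrow> real) \<Rightarrow> real \<Rightarrow> real \<Rightarrow> real \<Rightarrow> real \<Rightarrow> real" where
  "riemann_solution g um up x t =
     (let I = {up..um};
          H = upper_concave_envelope I g;
          D = deriv_within I H
      in if x \<le> D um * t then um
         else if x \<le> D up * t then (THE v. v \<in> I \<and> D v = x / t)
         else up)"

end

theory Submission
  imports Defs
begin


definition sF :: "real \<Rightarrow> real \<Rightarrow> real" where
  "sF b v = sqrt (4*b\<^sup>2 + (1 - 4*b) * v\<^sup>2)"
definition MM :: "real \<Rightarrow> real" where "MM b = (1 - 2*b)\<^sup>2 / (8*(1 - 4*b))"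
definition HH :: "real \<Rightarrow> real \<Rightarrow> real" where
  "HH b v = MM b - (max (sF b v - (1 - 2*b)/2) 0)\<^sup>2 / (2*(1 - 4*b))"
definition FF :: "real \<Rightarrow> real \<Rightarrow> real" where
  "FF b v = max (sF b v - (1 - 2*b)/2) 0 * v / sF b v"

lemma sF_sq: "0 < b \<Longrightarrow> b < 1/6 \<Longrightarrow> (sF b v)\<^sup>2 = 4*b\<^sup>2 + (1 - 4*b) * v\<^sup>2"
  unfolding sF_def by (simp add: add_nonneg_nonneg)

lemma sF_pos: "0 < b \<Longrightarrow> b < 1/6 \<Longrightarrow> sF b v > 0"
  unfolding sF_def by (intro real_sqrt_gt_zero add_pos_nonneg) auto

lemma sF_even: "sF b (-v) = sF b v" unfolding sF_def by simp

lemma Gf_eq: assumes "0 < b" "b < 1/6"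
  shows "Gf b v = MM b - (sF b v - (1 - 2*b)/2)\<^sup>2 / (2*(1 - 4*b))"
proof -
  define s where "s = sF b v"
  have s2: "s^2 = 4*b\<^sup>2 + (1 - 4*b) * v\<^sup>2" using sF_sq[OF assms] s_def by simp
  have sp: "s > 0" using sF_pos[OF assms] s_def by simp
  have den: "4*b\<^sup>2 + (1 - 2*b) * s > 0" using assms sp by (intro add_pos_pos) auto
  have k: "1 - 4*b > 0" using assms by simp
  have "Gf b v = - v\<^sup>2 / 2 + (4*b\<^sup>2 + (1 - 2*b)\<^sup>2 * v\<^sup>2) / (2 * (4*b\<^sup>2 + (1 - 2*b) * s))"
    unfolding Gf_def s_def sF_def by simp
  also have "\<dots> = s * ((1 - 2*b) - s) / (2*(1 - 4*b))"
  proof -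
    define D where "D = 4*b\<^sup>2 + (1 - 2*b) * s"
    have kv: "(1 - 4*b) * v\<^sup>2 = s^2 - 4*b\<^sup>2" using s2 by simp
    have "(1 - 4*b) * (- v\<^sup>2 * D + 4*b\<^sup>2 + (1 - 2*b)\<^sup>2 * v\<^sup>2)
        = - ((1 - 4*b) * v\<^sup>2) * D + (1 - 4*b) * 4*b\<^sup>2 + (1 - 2*b)\<^sup>2 * ((1 - 4*b) * v\<^sup>2)"
      by (simp add: algebra_simps)
    also have "\<dots> = - (s^2 - 4*b\<^sup>2) * D + (1 - 4*b) * 4*b\<^sup>2 + (1 - 2*b)\<^sup>2 * (s^2 - 4*b\<^sup>2)"
      unfolding kv ..
    also have "\<dots> = s * ((1 - 2*b) - s) * D" unfolding D_def by (simp add: algebra_simps power2_eq_square)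
    finally have key: "(1 - 4*b) * (- v\<^sup>2 * D + 4*b\<^sup>2 + (1 - 2*b)\<^sup>2 * v\<^sup>2) = s * ((1 - 2*b) - s) * D" .
    have Dp: "D > 0" using den D_def by simp
    have "- v\<^sup>2 / 2 + (4*b\<^sup>2 + (1 - 2*b)\<^sup>2 * v\<^sup>2) / (2 * D)
        = (1 - 4*b) * (- v\<^sup>2 * D + 4*b\<^sup>2 + (1 - 2*b)\<^sup>2 * v\<^sup>2) / (2 * D * (1 - 4*b))"
      using Dp k by (simp add: field_simps)
    also have "\<dots> = s * ((1 - 2*b) - s) / (2*(1 - 4*b))" unfolding key using Dp k by (simp add: field_simps)
    finally show ?thesis unfolding D_def .
  qed
  also have "\<dots> = MM b - (s - (1 - 2*b)/2)\<^sup>2 / (2*(1 - 4*b))"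
  proof -
    have gen: "MM b - X / (2*(1 - 4*b)) = ((1 - 2*b)\<^sup>2/4 - X) / (2*(1 - 4*b))" for X
    proof -
      have "\<And>c kk X::real. kk > 0 \<Longrightarrow> c / (8*kk) - X/(2*kk) = (c/4 - X)/(2*kk)"
        by (simp add: field_simps)
      then show ?thesis unfolding MM_def using k by blast
    qed
    have num: "(1 - 2*b)\<^sup>2/4 - (s - (1 - 2*b)/2)\<^sup>2 = s * ((1 - 2*b) - s)"
      by (simp add: algebra_simps power2_eq_square)
    show ?thesis unfolding gen num ..
  qed
  finally show ?thesis by (simp add: s_def)
qed

lemma vmax_sq: assumes "0 < b" "b < 1/6"
  shows "(vmax b)\<^sup>2 = ((1 - 2*b)\<^sup>2/4 - 4*b\<^sup>2) / (1 - 4*b)" and "vmax b > 0"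
proof -
  have X: "(1 + 2*b) * (1 - 6*b) / (1 - 4*b) > 0" using assms by simp
  have "(vmax b)\<^sup>2 = (1/4) * (sqrt ((1 + 2*b) * (1 - 6*b) / (1 - 4*b)))\<^sup>2"
    unfolding vmax_def by (simp add: power_mult_distrib power2_eq_square)
  also have "\<dots> = (1/4) * ((1 + 2*b) * (1 - 6*b) / (1 - 4*b))" using X by simp
  also have "\<dots> = ((1 + 2*b) * (1 - 6*b) / 4) / (1 - 4*b)" by simp
  also have "(1 + 2*b) * (1 - 6*b) / 4 = (1 - 2*b)\<^sup>2/4 - 4*b\<^sup>2"
    by (simp add: field_simps power2_eq_square)
  finally show "(vmax b)\<^sup>2 = ((1 - 2*b)\<^sup>2/4 - 4*b\<^sup>2) / (1 - 4*b)" .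
  show "vmax b > 0" unfolding vmax_def using X by simp
qed

lemma sF_sq_cmp: assumes "0 < b" "b < 1/6"
  shows "(sF b v)\<^sup>2 - ((1 - 2*b)/2)\<^sup>2 = (1 - 4*b) * (v\<^sup>2 - (vmax b)\<^sup>2)"
proof -
  have k: "1 - 4*b \<noteq> 0" using assms by simp
  have "(1 - 4*b) * (vmax b)\<^sup>2 = (1 - 2*b)\<^sup>2/4 - 4*b\<^sup>2"
    unfolding vmax_sq(1)[OF assms] using k by simp
  then show ?thesis unfolding sF_sq[OF assms] right_diff_distrib
    by (simp add: power_divide)
qed

lemma sF_le_iff: assumes "0 < b" "b < 1/6"
  shows "sF b v \<le> (1 - 2*b)/2 \<longleftrightarrow> \<bar>v\<bar> \<le> vmax b"
proof -
  have k: "1 - 4*b > 0" using assms by simp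
  have c: "(1 - 2*b)/2 > 0" using assms by simp
  have "sF b v \<le> (1 - 2*b)/2 \<longleftrightarrow> (sF b v)\<^sup>2 \<le> ((1 - 2*b)/2)\<^sup>2"
    using sF_pos[OF assms, of v] c abs_le_square_iff[of "sF b v" "(1 - 2*b)/2"] by simp
  also have "\<dots> \<longleftrightarrow> (1 - 4*b) * (v\<^sup>2 - (vmax b)\<^sup>2) \<le> 0"
    using sF_sq_cmp[OF assms, of v] by linarith
  also have "\<dots> \<longleftrightarrow> v\<^sup>2 \<le> (vmax b)\<^sup>2"
    using k by (simp add: mult_le_0_iff)
  also have "\<dots> \<longleftrightarrow> \<bar>v\<bar> \<le> vmax b"
    using vmax_sq(2)[OF assms] abs_le_square_iff[of v "vmax b"] by simp
  finally show ?thesis .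
qed

lemma sF_ge_iff: assumes "0 < b" "b < 1/6"
  shows "sF b v \<ge> (1 - 2*b)/2 \<longleftrightarrow> \<bar>v\<bar> \<ge> vmax b"
proof -
  have k: "1 - 4*b > 0" using assms by simp
  have c: "(1 - 2*b)/2 > 0" using assms by simp
  have "sF b v \<ge> (1 - 2*b)/2 \<longleftrightarrow> (sF b v)\<^sup>2 \<ge> ((1 - 2*b)/2)\<^sup>2"
    using sF_pos[OF assms, of v] c abs_le_square_iff[of "(1 - 2*b)/2" "sF b v"] by simp
  also have "\<dots> \<longleftrightarrow> (1 - 4*b) * (v\<^sup>2 - (vmax b)\<^sup>2) \<ge> 0"
    using sF_sq_cmp[OF assms, of v] by linarith
  also have "\<dots> \<longleftrightarrow> v\<^sup>2 \<ge> (vmax b)\<^sup>2"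
    using k by (simp add: zero_le_mult_iff)
  also have "\<dots> \<longleftrightarrow> \<bar>v\<bar> \<ge> vmax b"
    using vmax_sq(2)[OF assms] abs_le_square_iff[of "vmax b" v] by simp
  finally show ?thesis .
qed

lemma sF_vmax: assumes "0 < b" "b < 1/6" shows "sF b (vmax b) = (1 - 2*b)/2"
  using sF_le_iff[OF assms, of "vmax b"] sF_ge_iff[OF assms, of "vmax b"] vmax_sq(2)[OF assms] by simp

lemma Gf_vmax: assumes "0 < b" "b < 1/6" shows "Gf b (vmax b) = MM b"
  using Gf_eq[OF assms, of "vmax b"] sF_vmax[OF assms] by simp

lemma HH_out: assumes "0 < b" "b < 1/6" "\<bar>v\<bar> \<ge> vmax b" shows "HH b v = Gf b v"
  using sF_ge_iff[OF assms(1,2), of v] assms(3) unfolding HH_def Gf_eq[OF assms(1,2)] by simp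

lemma HH_in: assumes "0 < b" "b < 1/6" "\<bar>v\<bar> \<le> vmax b" shows "HH b v = MM b"
  using sF_le_iff[OF assms(1,2), of v] assms(3) unfolding HH_def by simp

lemma Gf_le_HH: assumes "0 < b" "b < 1/6" shows "Gf b v \<le> HH b v"
proof -
  have k: "1 - 4*b > 0" using assms by simp
  have "(max (sF b v - (1 - 2*b)/2) 0)\<^sup>2 \<le> (sF b v - (1 - 2*b)/2)\<^sup>2"
    by (simp add: max_def)
  then show ?thesis unfolding HH_def Gf_eq[OF assms] using k by (simp add: divide_right_mono)
qed



lemma sF_convex: assumes "0 < b" "b < 1/6" "u \<ge> 0" "w \<ge> 0" "u + w = 1"
  shows "sF b (u*x + w*y) \<le> u * sF b x + w * sF b y"
proof -
  define a where "a = 4*b\<^sup>2"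
  define k where "k = 1 - 4*b"
  have a0: "a \<ge> 0" and k0: "k > 0" using assms by (auto simp: a_def k_def)
  define X where "X = sF b x"
  define Y where "Y = sF b y"
  have X2: "X^2 = a + k*x^2" and Y2: "Y^2 = a + k*y^2"
    using sF_sq[OF assms(1,2)] by (auto simp: X_def Y_def a_def k_def)
  have X0: "X > 0" "Y > 0" using sF_pos[OF assms(1,2)] by (auto simp: X_def Y_def)
  have "(X*Y)^2 \<ge> (a + k*x*y)^2"
  proof -
    have "(X*Y)^2 = (a + k*x^2)*(a + k*y^2)" by (simp add: power_mult_distrib X2 Y2)
    also have "\<dots> = (a + k*x*y)^2 + a*k*(x-y)^2" by (simp add: algebra_simps power2_eq_square)
    finally show ?thesis using a0 k0 by simp
  qed
  then have XY: "X*Y \<ge> a + k*x*y"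
    by (rule power2_le_imp_le) (use X0 in simp)
  have R0: "u*X + w*Y \<ge> 0" using assms X0 by simp
  have "a + k*(u*x+w*y)^2 \<le> (u*X + w*Y)^2"
  proof -
    have "(u*X + w*Y)^2 = u^2*X^2 + w^2*Y^2 + 2*u*w*(X*Y)" by (simp add: algebra_simps power2_eq_square)
    also have "\<dots> \<ge> u^2*X^2 + w^2*Y^2 + 2*u*w*(a + k*x*y)"
      using XY assms by (simp add: mult_left_mono)
    moreover have "u^2*X^2 + w^2*Y^2 + 2*u*w*(a + k*x*y) = (u+w)^2 * a + k*(u*x+w*y)^2"
      unfolding X2 Y2 by (simp add: algebra_simps power2_eq_square)
    ultimately show ?thesis using assms by simp
  qed
  then have "sqrt (a + k*(u*x+w*y)^2) \<le> sqrt ((u*X + w*Y)^2)" by (rule real_sqrt_le_mono)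
  then have "sqrt (a + k*(u*x+w*y)^2) \<le> u*X + w*Y" using R0 by simp
  moreover have "sF b (u*x+w*y) = sqrt (a + k*(u*x+w*y)^2)" unfolding sF_def a_def k_def ..
  ultimately show ?thesis by (simp add: X_def Y_def)
qed

definition pp :: "real \<Rightarrow> real \<Rightarrow> real" where "pp b v = max (sF b v - (1 - 2*b)/2) 0"

lemma pp_convex: assumes "0 < b" "b < 1/6" "u \<ge> 0" "w \<ge> 0" "u + w = 1"
  shows "pp b (u*x + w*y) \<le> u * pp b x + w * pp b y"
proof -
  have "pp b (u*x + w*y) \<le> max (u * sF b x + w * sF b y - (1 - 2*b)/2) 0"
    unfolding pp_def by (intro max.mono) (use sF_convex[OF assms, of x y] in auto)
  also have "\<dots> = max (u * (sF b x - (1 - 2*b)/2) + w * (sF b y - (1 - 2*b)/2)) 0"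
  proof -
    have gen: "\<And>A B c. u * (A - c) + w * (B - c) = u * A + w * B - (u + w) * c"
      by (simp add: algebra_simps)
    have "u * (sF b x - (1 - 2*b)/2) + w * (sF b y - (1 - 2*b)/2) = u * sF b x + w * sF b y - (u + w) * ((1 - 2*b)/2)"
      by (rule gen)
    also have "\<dots> = u * sF b x + w * sF b y - (1 - 2*b)/2" unfolding assms(5) by simp
    finally show ?thesis by simp
  qed
  also have "\<dots> \<le> u * pp b x + w * pp b y"
    unfolding pp_def using assms(3,4)
    by (intro max.boundedI add_nonneg_nonneg mult_nonneg_nonneg add_mono mult_left_mono) auto
  finally show ?thesis .
qed

lemma pp_sq_convex: assumes "0 < b" "b < 1/6" "u \<ge> 0" "w \<ge> 0" "u + w = 1"
  shows "(pp b (u*x + w*y))^2 \<le> u * (pp b x)^2 + w * (pp b y)^2"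
proof -
  have p0: "pp b z \<ge> 0" for z unfolding pp_def by simp
  have "(pp b (u*x + w*y))^2 \<le> (u * pp b x + w * pp b y)^2"
    using pp_convex[OF assms] p0 by (simp add: power_mono)
  also have "\<dots> = u * (pp b x)^2 + w * (pp b y)^2 - u*w*(pp b x - pp b y)^2"
  proof -
    have wu: "w = 1 - u" using assms(5) by simp
    show ?thesis unfolding wu by (simp add: algebra_simps power2_eq_square)
  qed
  also have "\<dots> \<le> u * (pp b x)^2 + w * (pp b y)^2" using assms by simp
  finally show ?thesis .
qed

lemma HH_pp: "HH b v = MM b - (pp b v)^2 / (2*(1 - 4*b))" unfolding HH_def pp_def by simp

lemma HH_concave: assumes "0 < b" "b < 1/6" "convex S" shows "concave_on S (HH b)"
  unfolding concave_on_iff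
proof (intro conjI ballI allI impI)
  show "convex S" by (rule assms(3))
  fix x y u w :: real assume "0 \<le> u" "0 \<le> w" "u + w = 1"
  have k: "1 - 4*b > 0" using assms by simp
  have "(pp b (u*x + w*y))^2 / (2*(1 - 4*b)) \<le> (u * (pp b x)^2 + w * (pp b y)^2) / (2*(1 - 4*b))"
    using pp_sq_convex[OF assms(1,2) \<open>0 \<le> u\<close> \<open>0 \<le> w\<close> \<open>u + w = 1\<close>] k by (simp add: divide_right_mono)
  moreover have "u*(M - A/K) + w*(M - B/K) = M - (u*A + w*B)/K" for M A B K :: real
  proof -
    have "u*(M - A/K) + w*(M - B/K) = (u+w)*M - (u*A + w*B)/K"
      by (simp add: algebra_simps add_divide_distrib diff_divide_distrib)
    then show ?thesis using \<open>u + w = 1\<close> by simp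
  qed
  ultimately show "u * HH b x + w * HH b y \<le> HH b (u *\<^sub>R x + w *\<^sub>R y)"
    unfolding HH_pp by simp
qed

lemma Gf_even: "Gf b (-v) = Gf b v" unfolding Gf_def by simp

lemma envelope_eq: assumes "0 < b" "b < 1/6" "up \<le> - vmax b" "vmax b \<le> um" "v \<in> {up..um}"
  shows "upper_concave_envelope {up..um} (Gf b) v = HH b v"
  unfolding upper_concave_envelope_def
proof (rule cInf_eq_minimum)
  have "concave_on {up..um} (HH b)" by (rule HH_concave[OF assms(1,2)]) simp
  then show "HH b v \<in> {h v |h. concave_on {up..um} h \<and> (\<forall>x\<in>{up..um}. Gf b x \<le> h x)}"
    using Gf_le_HH[OF assms(1,2)] by blast
next
  fix z assume "z \<in> {h v |h. concave_on {up..um} h \<and> (\<forall>x\<in>{up..um}. Gf b x \<le> h x)}"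
  then obtain h where z: "z = h v" and hc: "concave_on {up..um} h" and hg: "\<forall>x\<in>{up..um}. Gf b x \<le> h x"
    by blast
  define m where "m = vmax b"
  have m0: "m > 0" using vmax_sq(2)[OF assms(1,2)] m_def by simp
  show "HH b v \<le> z"
  proof (cases "\<bar>v\<bar> \<ge> m")
    case True
    have "HH b v = Gf b v" using HH_out[OF assms(1,2)] True m_def by blast
    also have "\<dots> \<le> h v" using hg assms(5) by blast
    finally show ?thesis using z by simp
  next
    case False
    define t where "t = (v + m) / (2*m)"
    have t: "0 \<le> t" "t \<le> 1" using False m0 by (auto simp: t_def field_simps)
    have vt: "(1 - t) *\<^sub>R (-m) + t *\<^sub>R m = v" using m0 by (simp add: t_def field_simps)
    have mem: "-m \<in> {up..um}" "m \<in> {up..um}" using assms(3,4) m0 m_def by auto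
    have "h v \<ge> (1 - t) * h (-m) + t * h m"
      using concave_onD[OF hc t mem] vt by simp
    moreover have "(1 - t) * h (-m) + t * h m \<ge> (1 - t) * MM b + t * MM b"
    proof -
      have "Gf b (-m) \<le> h (-m)" "Gf b m \<le> h m" using hg mem by auto
      then have "MM b \<le> h (-m)" "MM b \<le> h m" using Gf_vmax[OF assms(1,2)] Gf_even[of b m] m_def by auto
      then show ?thesis using t by (intro add_mono mult_left_mono) auto
    qed
    moreover have "(1 - t) * MM b + t * MM b = MM b" by (simp add: algebra_simps)
    moreover have "HH b v = MM b" using HH_in[OF assms(1,2)] False m_def by simp
    ultimately show ?thesis using z by linarith
  qed
qed



lemma q_deriv: "((\<lambda>x::real. (max x 0)^2) has_real_derivative 2 * max x 0) (at x)"
proof (cases "x > 0")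
  case True
  have "((\<lambda>x::real. x^2) has_real_derivative 2 * x) (at x)"
    by (auto intro!: derivative_eq_intros)
  then have "((\<lambda>x::real. (max x 0)^2) has_real_derivative 2 * x) (at x)"
    by (rule has_field_derivative_transform_within_open[where S="{0<..}"]) (use True in auto)
  then show ?thesis using True by simp
next
  case F: False
  show ?thesis
  proof (cases "x < 0")
    case True
    have "((\<lambda>x::real. 0) has_real_derivative 0) (at x)" by simp
    then have "((\<lambda>x::real. (max x 0)^2) has_real_derivative 0) (at x)"
      by (rule has_field_derivative_transform_within_open[where S="{..<0}"]) (use True in auto)
    then show ?thesis using True by simp
  next
    case False
    then have x0: "x = 0" using F by simp
    have "((\<lambda>y::real. max y 0) \<longlongrightarrow> max 0 0) (at 0)"
      by (intro tendsto_intros)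
    then have lim: "((\<lambda>y::real. max y 0) \<longlongrightarrow> 0) (at 0)" by simp
    have ev: "\<forall>\<^sub>F y in at (0::real). max y 0 = ((max y 0)^2 - (max 0 0)^2) / (y - 0)"
      unfolding eventually_at_filter
      by (rule always_eventually) (auto simp: max_def power2_eq_square)
    have "((\<lambda>y::real. ((max y 0)^2 - (max 0 0)^2) / (y - 0)) \<longlongrightarrow> 0) (at 0)"
      using tendsto_cong[OF ev] lim by simp
    then show ?thesis unfolding x0 has_field_derivative_iff by simp
  qed
qed

lemma sF_deriv: assumes "0 < b" "b < 1/6"
  shows "(sF b has_real_derivative (1 - 4*b) * v / sF b v) (at v)"
proof -
  have pos: "4*b\<^sup>2 + (1 - 4*b) * v\<^sup>2 > 0" using assms by (intro add_pos_nonneg) auto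
  have "((\<lambda>v. sqrt (4*b\<^sup>2 + (1 - 4*b) * v\<^sup>2)) has_real_derivative
        inverse (sqrt (4*b\<^sup>2 + (1 - 4*b) * v\<^sup>2)) / 2 * ((1 - 4*b) * (2 * v))) (at v)"
  proof -
    have d0: "((\<lambda>v::real. v^2) has_real_derivative 2 * v) (at v)"
      using DERIV_pow[of 2 v UNIV] by simp
    have d1: "((\<lambda>v. 4*b\<^sup>2 + (1 - 4*b) * v\<^sup>2) has_real_derivative 0 + (1 - 4*b) * (2 * v)) (at v)"
      by (rule DERIV_add[OF DERIV_const DERIV_cmult[OF d0]])
    have d2: "((\<lambda>v. 4*b\<^sup>2 + (1 - 4*b) * v\<^sup>2) has_real_derivative (1 - 4*b) * (2 * v)) (at v)"
      using d1 by simp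
    show ?thesis by (rule DERIV_chain2[OF DERIV_real_sqrt[OF pos] d2])
  qed
  moreover have "inverse (sqrt (4*b\<^sup>2 + (1 - 4*b) * v\<^sup>2)) / 2 * ((1 - 4*b) * (2 * v))
     = (1 - 4*b) * v / sF b v"
  proof -
    have g: "\<And>ss kk vv::real. inverse ss / 2 * (kk * (2* vv)) = kk* vv/ss" by (cases "ss = 0") (simp_all add: field_simps)
    show ?thesis unfolding sF_def by (rule g)
  qed
  ultimately show ?thesis unfolding sF_def[abs_def] by simp
qed

lemma HH_deriv: assumes "0 < b" "b < 1/6"
  shows "(HH b has_real_derivative - FF b v) (at v)"
proof -
  have k: "1 - 4*b > 0" using assms by simp
  have d1: "((\<lambda>v. sF b v - (1 - 2*b)/2) has_real_derivative (1 - 4*b) * v / sF b v) (at v)"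
    using sF_deriv[OF assms] by (auto intro!: derivative_eq_intros)
  have d2: "((\<lambda>v. (max (sF b v - (1 - 2*b)/2) 0)^2) has_real_derivative
      2 * max (sF b v - (1 - 2*b)/2) 0 * ((1 - 4*b) * v / sF b v)) (at v)"
    by (rule DERIV_chain2[OF q_deriv d1])
  have d3: "((\<lambda>v. MM b - (max (sF b v - (1 - 2*b)/2) 0)^2 / (2*(1 - 4*b))) has_real_derivative
      0 - 2 * max (sF b v - (1 - 2*b)/2) 0 * ((1 - 4*b) * v / sF b v) / (2*(1 - 4*b))) (at v)"
    by (intro DERIV_diff DERIV_const DERIV_cdivide d2)
  have eq: "0 - 2 * max (sF b v - (1 - 2*b)/2) 0 * ((1 - 4*b) * v / sF b v) / (2*(1 - 4*b)) = - FF b v"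
  proof -
    have g: "\<And>p s kk v::real. kk > 0 \<Longrightarrow> s > 0 \<Longrightarrow> 0 - 2 * p * (kk * v / s) / (2*kk) = - (p * v / s)"
      by (simp add: field_simps)
    show ?thesis unfolding FF_def by (rule g) (use k sF_pos[OF assms] in auto)
  qed
  show ?thesis using d3 unfolding eq HH_def[abs_def] .
qed

lemma deriv_env: assumes "0 < b" "b < 1/6" "up \<le> - vmax b" "vmax b \<le> um" "v \<in> {up..um}"
  shows "deriv_within {up..um} (upper_concave_envelope {up..um} (Gf b)) v = - FF b v"
proof -
  have ul: "up < um" using assms(3,4) vmax_sq(2)[OF assms(1,2)] by simp
  have d: "(upper_concave_envelope {up..um} (Gf b) has_real_derivative - FF b v) (at v within {up..um})"
    by (rule has_field_derivative_transform_within[OF has_field_derivative_at_within[OF HH_deriv[OF assms(1,2)]], of 1])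
       (use assms envelope_eq in auto)
  show ?thesis unfolding deriv_within_def
  proof (rule some_equality)
    show "(upper_concave_envelope {up..um} (Gf b) has_real_derivative - FF b v) (at v within {up..um})" by (rule d)
  next
    fix D assume "(upper_concave_envelope {up..um} (Gf b) has_real_derivative D) (at v within {up..um})"
    then show "D = - FF b v"
      using vector_derivative_unique_within_closed_interval[of up um v] d ul assms(5)
      by (simp add: has_real_derivative_iff_has_vector_derivative)
  qed
qed



lemma sF_gt_iff: assumes "0 < b" "b < 1/6"
  shows "sF b v > (1 - 2*b)/2 \<longleftrightarrow> \<bar>v\<bar> > vmax b"
  using sF_le_iff[OF assms, of v] by linarith

lemma FF_in: assumes "0 < b" "b < 1/6" "\<bar>v\<bar> \<le> vmax b" shows "FF b v = 0"
  using sF_le_iff[OF assms(1,2), of v] assms(3) unfolding FF_def by simp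

lemma FF_odd: "FF b (-v) = - FF b v" unfolding FF_def sF_even by simp

lemma FF_alt: assumes "0 < b" "b < 1/6" "vmax b \<le> \<bar>v\<bar>"
  shows "FF b v = (1 - ((1 - 2*b)/2) / sF b v) * v"
proof -
  have s: "sF b v > 0" using sF_pos[OF assms(1,2)] .
  have "max (sF b v - (1 - 2*b)/2) 0 = sF b v - (1 - 2*b)/2"
    using sF_ge_iff[OF assms(1,2), of v] assms(3) by simp
  moreover have "\<And>c. (sF b v - c) * v / sF b v = (1 - c / sF b v) * v"
    using s by (simp add: field_simps)
  ultimately show ?thesis unfolding FF_def by simp
qed

lemma sF_mono: assumes "0 < b" "b < 1/6" "0 \<le> v1" "v1 \<le> v2" shows "sF b v1 \<le> sF b v2"
proof -
  have "v1^2 \<le> v2^2" using assms(3,4) by (simp add: power_mono)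
  then have "(1 - 4*b) * v1^2 \<le> (1 - 4*b) * v2^2" using assms(2) by (simp add: mult_left_mono)
  then show ?thesis unfolding sF_def by simp
qed

lemma FF_pos: assumes "0 < b" "b < 1/6" "vmax b < v" shows "FF b v > 0"
proof -
  have v: "v > 0" using vmax_sq(2)[OF assms(1,2)] assms(3) by simp
  have "sF b v > (1 - 2*b)/2" using sF_gt_iff[OF assms(1,2), of v] assms(3) v by simp
  then show ?thesis unfolding FF_def using v sF_pos[OF assms(1,2), of v] by simp
qed

lemma FF_strict_mono: assumes "0 < b" "b < 1/6" "vmax b \<le> v1" "v1 < v2"
  shows "FF b v1 < FF b v2"
proof -
  define c where "c = (1 - 2*b)/2"
  have m0: "vmax b > 0" using vmax_sq(2)[OF assms(1,2)] .
  have v1: "v1 > 0" using m0 assms by simp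
  have s1: "sF b v1 > 0" and s2: "sF b v2 > 0" using sF_pos[OF assms(1,2)] by auto
  have sle: "sF b v1 \<le> sF b v2" using sF_mono[OF assms(1,2)] v1 assms(4) by simp
  have c0: "c > 0" using assms c_def by simp
  have A: "1 - c / sF b v1 \<le> 1 - c / sF b v2"
    using sle s1 c0 by (simp add: divide_left_mono)
  have A2: "1 - c / sF b v2 > 0"
  proof -
    have "sF b v2 > c" using sF_gt_iff[OF assms(1,2), of v2] assms v1 c_def by simp
    then show ?thesis using s2 c0 by (simp add: field_simps)
  qed
  have "FF b v1 = (1 - c / sF b v1) * v1" unfolding c_def by (rule FF_alt[OF assms(1,2)]) (use assms v1 in simp)
  also have "\<dots> \<le> (1 - c / sF b v2) * v1" using A v1 by (simp add: mult_right_mono)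
  also have "\<dots> < (1 - c / sF b v2) * v2" using A2 assms(4) by simp
  also have "\<dots> = FF b v2" unfolding c_def by (rule FF_alt[OF assms(1,2), symmetric]) (use assms v1 in simp)
  finally show ?thesis .
qed

lemma FF_mono: assumes "0 < b" "b < 1/6" "vmax b \<le> v1" "v1 \<le> v2"
  shows "FF b v1 \<le> FF b v2"
  using FF_strict_mono[OF assms(1,2,3), of v2] assms(4) by (cases "v1 = v2") auto

lemma FF_cont: assumes "0 < b" "b < 1/6" shows "continuous_on S (FF b)"
proof -
  have "continuous_on S (\<lambda>v. max (sqrt (4*b\<^sup>2 + (1 - 4*b) * v\<^sup>2) - (1 - 2*b)/2) 0 * v
          / sqrt (4*b\<^sup>2 + (1 - 4*b) * v\<^sup>2))"
  proof (rule continuous_on_divide)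
    show "\<forall>v\<in>S. sqrt (4*b\<^sup>2 + (1 - 4*b) * v\<^sup>2) \<noteq> 0"
      using sF_pos[OF assms] unfolding sF_def by (metis less_irrefl)
  qed (intro continuous_intros)+
  then show ?thesis unfolding FF_def[abs_def] sF_def .
qed

lemma FF_neg_region: assumes "0 < b" "b < 1/6" "FF b v > 0" shows "v > vmax b"
proof (rule ccontr)
  assume "\<not> v > vmax b"
  then show False
  proof (cases "v \<ge> - vmax b")
    case True
    then have "\<bar>v\<bar> \<le> vmax b" using \<open>\<not> v > vmax b\<close> by (simp add: abs_le_iff)
    then show False using FF_in[OF assms(1,2), of v] assms(3) by simp
  next
    case False
    then have "FF b (-v) > 0" using FF_pos[OF assms(1,2), of "-v"] by simp
    then show False using FF_odd[of b v] assms(3) by simp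
  qed
qed

lemma FF_solve: assumes "0 < b" "b < 1/6" "0 < y" "y \<le> FF b p" "vmax b \<le> p"
  shows "\<exists>w. vmax b < w \<and> w \<le> p \<and> FF b w = y"
proof -
  have "FF b (vmax b) = 0" using FF_in[OF assms(1,2)] vmax_sq(2)[OF assms(1,2)] by simp
  then obtain w where w: "vmax b \<le> w" "w \<le> p" "FF b w = y"
    using IVT'[of "FF b" "vmax b" y p] FF_cont[OF assms(1,2)] assms by force
  then have "vmax b < w" using FF_neg_region[OF assms(1,2), of w] assms(3) by simp
  then show ?thesis using w by blast
qed

lemma FF_inj: assumes "0 < b" "b < 1/6" "FF b w1 = y" "FF b w2 = y" "vmax b \<le> w1" "vmax b \<le> w2"
  shows "w1 = w2"
  using FF_strict_mono[OF assms(1,2,5), of w2] FF_strict_mono[OF assms(1,2,6), of w1] assms(3,4)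
  by (cases w1 w2 rule: linorder_cases) auto



theorem mainTheorem6:
  fixes b um up :: real
  assumes "0 < b" "b < 1/6"
    and "um \<in> {-1..1}" "up \<in> {-1..1}"
    and "um > vmax b" "up < - vmax b"
  shows "(\<forall>v \<in> {up..- vmax b} \<union> {vmax b..um}.
            upper_concave_envelope {up..um} (Gf b) v = Gf b v)
       \<and> (\<forall>v \<in> {- vmax b..vmax b}.
            upper_concave_envelope {up..um} (Gf b) v = Gf b (vmax b))
       \<and> (\<forall>t > 0.
            ((\<lambda>x. riemann_solution (Gf b) um up x t) \<longlongrightarrow> vmax b) (at_left 0)
          \<and> ((\<lambda>x. riemann_solution (Gf b) um up x t) \<longlongrightarrow> - vmax b) (at_right 0))"
proof -
  note b = assms(1,2)
  define m where "m = vmax b"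
  have m0: "m > 0" using vmax_sq(2)[OF b] m_def by simp
  have env: "upper_concave_envelope {up..um} (Gf b) v = HH b v" if "v \<in> {up..um}" for v
    using envelope_eq[OF b, of up um v] assms(5,6) that by simp
  have Dv: "deriv_within {up..um} (upper_concave_envelope {up..um} (Gf b)) v = - FF b v"
    if "v \<in> {up..um}" for v
    using deriv_env[OF b, of up um v] assms(5,6) that by simp
  have P1: "\<forall>v \<in> {up..- vmax b} \<union> {vmax b..um}. upper_concave_envelope {up..um} (Gf b) v = Gf b v"
  proof
    fix v assume v: "v \<in> {up..- vmax b} \<union> {vmax b..um}"
    then have vI: "v \<in> {up..um}" using m0 m_def assms(5,6) by auto
    have "\<bar>v\<bar> \<ge> vmax b" using v m0 m_def by auto
    then show "upper_concave_envelope {up..um} (Gf b) v = Gf b v"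
      using env[OF vI] HH_out[OF b] by simp
  qed
  have P2: "\<forall>v \<in> {- vmax b..vmax b}. upper_concave_envelope {up..um} (Gf b) v = Gf b (vmax b)"
  proof
    fix v assume v: "v \<in> {- vmax b..vmax b}"
    then have vI: "v \<in> {up..um}" using assms(5,6) by auto
    have "\<bar>v\<bar> \<le> vmax b" using v by auto
    then show "upper_concave_envelope {up..um} (Gf b) v = Gf b (vmax b)"
      using env[OF vI] HH_in[OF b] Gf_vmax[OF b] by simp
  qed
  have P3: "((\<lambda>x. riemann_solution (Gf b) um up x t) \<longlongrightarrow> vmax b) (at_left 0)
          \<and> ((\<lambda>x. riemann_solution (Gf b) um up x t) \<longlongrightarrow> - vmax b) (at_right 0)" if t: "t > 0" for t
  proof -
    define D where "D = deriv_within {up..um} (upper_concave_envelope {up..um} (Gf b))"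
    have R: "riemann_solution (Gf b) um up x t =
        (if x \<le> D um * t then um else if x \<le> D up * t then (THE v. v \<in> {up..um} \<and> D v = x / t) else up)" for x
      unfolding riemann_solution_def Let_def D_def by simp
    have umI: "um \<in> {up..um}" and upI: "up \<in> {up..um}" using assms(5,6) m0 m_def by auto
    have Dum: "D um = - FF b um" using Dv[OF umI] D_def by simp
    have Dup: "D up = FF b (- up)" using Dv[OF upI] D_def FF_odd[of b up] by simp
    have left: "((\<lambda>x. riemann_solution (Gf b) um up x t) \<longlongrightarrow> m) (at_left 0)"
      unfolding tendsto_iff
    proof (intro allI impI)
      fix e :: real assume e: "e > 0"
      define p where "p = min (m + e/2) um"
      have pm: "m < p" "p \<le> um" "p \<le> m + e/2" using e assms(5) m_def by (auto simp: p_def)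
      have Fp: "FF b p > 0" using FF_pos[OF b, of p] pm m_def by simp
      have Fpum: "FF b p \<le> FF b um" using FF_mono[OF b, of p um] pm m_def by simp
      have Fup: "FF b (- up) > 0" using FF_pos[OF b, of "-up"] assms(6) by simp
      have ev: "\<forall>\<^sub>F x in at_left 0. x \<in> {- (FF b p * t)<..<0}"
        by (rule eventually_at_left_real) (use Fp t in simp)
      show "\<forall>\<^sub>F x in at_left 0. dist (riemann_solution (Gf b) um up x t) m < e"
      proof (rule eventually_mono[OF ev])
        fix x assume x: "x \<in> {- (FF b p * t)<..<0}"
        define y where "y = - x / t"
        have y0: "0 < y" using x t by (simp add: y_def divide_neg_pos)
        have yp: "y \<le> FF b p"
        proof -
          have "- x \<le> FF b p * t" using x by simp
          then show ?thesis unfolding y_def by (simp only: pos_divide_le_eq[OF t])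
        qed
        obtain w where w: "m < w" "w \<le> p" "FF b w = y"
          using FF_solve[OF b y0 yp] pm m_def by auto
        have wI: "w \<in> {up..um}" using w pm assms(6) m0 m_def by auto
        have c1: "\<not> x \<le> D um * t"
        proof -
          have "D um * t = - (FF b um * t)" using Dum by simp
          also have "\<dots> \<le> - (FF b p * t)" using Fpum t by (simp add: mult_right_mono)
          finally show ?thesis using x by simp
        qed
        have c2: "x \<le> D up * t"
        proof -
          have "0 < FF b (- up) * t" using Fup t by simp
          then show ?thesis using Dup x by simp
        qed
        have th: "(THE v. v \<in> {up..um} \<and> D v = x / t) = w"
        proof (rule the_equality)
          show "w \<in> {up..um} \<and> D w = x / t"
            using wI Dv[OF wI] w(3) D_def y_def by simp
        next
          fix v assume v: "v \<in> {up..um} \<and> D v = x / t"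
          then have "FF b v = y" using Dv[of v] D_def y_def by simp
          then have "m < v" using FF_neg_region[OF b, of v] y0 m_def by simp
          then show "v = w" using FF_inj[OF b \<open>FF b v = y\<close> w(3)] w(1) m_def by simp
        qed
        have "riemann_solution (Gf b) um up x t = w" using R[of x] c1 c2 th by simp
        then show "dist (riemann_solution (Gf b) um up x t) m < e"
          using w pm e by (simp add: dist_real_def)
      qed
    qed
    have right: "((\<lambda>x. riemann_solution (Gf b) um up x t) \<longlongrightarrow> - m) (at_right 0)"
      unfolding tendsto_iff
    proof (intro allI impI)
      fix e :: real assume e: "e > 0"
      define p where "p = min (m + e/2) (- up)"
      have pm: "m < p" "p \<le> - up" "p \<le> m + e/2" using e assms(6) m_def by (auto simp: p_def)
      have Fp: "FF b p > 0" using FF_pos[OF b, of p] pm m_def by simp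
      have Fpup: "FF b p \<le> FF b (- up)" using FF_mono[OF b, of p "- up"] pm m_def by simp
      have Fum: "FF b um > 0" using FF_pos[OF b, of um] assms(5) by simp
      have ev: "\<forall>\<^sub>F x in at_right 0. x \<in> {0<..<FF b p * t}"
        by (rule eventually_at_right_real) (use Fp t in simp)
      show "\<forall>\<^sub>F x in at_right 0. dist (riemann_solution (Gf b) um up x t) (- m) < e"
      proof (rule eventually_mono[OF ev])
        fix x assume x: "x \<in> {0<..<FF b p * t}"
        define y where "y = x / t"
        have y0: "0 < y" using x t by (simp add: y_def)
        have yp: "y \<le> FF b p"
        proof -
          have "x \<le> FF b p * t" using x by simp
          then show ?thesis unfolding y_def by (simp only: pos_divide_le_eq[OF t])
        qed
        obtain w where w: "m < w" "w \<le> p" "FF b w = y"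
          using FF_solve[OF b y0 yp] pm m_def by auto
        have wI: "- w \<in> {up..um}" using w pm assms(5) m0 m_def by auto
        have c1: "\<not> x \<le> D um * t"
        proof -
          have "D um * t < 0" using Dum Fum t by (simp add: mult_pos_pos)
          then show ?thesis using x by simp
        qed
        have c2: "x \<le> D up * t"
        proof -
          have "FF b p * t \<le> FF b (- up) * t" using Fpup t by (simp add: mult_right_mono)
          then show ?thesis using x Dup by simp
        qed
        have th: "(THE v. v \<in> {up..um} \<and> D v = x / t) = - w"
        proof (rule the_equality)
          show "- w \<in> {up..um} \<and> D (- w) = x / t"
            using wI Dv[OF wI] w(3) D_def y_def FF_odd[of b w] by simp
        next
          fix v assume v: "v \<in> {up..um} \<and> D v = x / t"
          then have "FF b (- v) = y" using Dv[of v] D_def y_def FF_odd[of b v] by simp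
          then have "m < - v" using FF_neg_region[OF b, of "- v"] y0 m_def by simp
          then have "- v = w" using FF_inj[OF b \<open>FF b (- v) = y\<close> w(3)] w(1) m_def by simp
          then show "v = - w" by simp
        qed
        have "riemann_solution (Gf b) um up x t = - w" using R[of x] c1 c2 th by simp
        then show "dist (riemann_solution (Gf b) um up x t) (- m) < e"
          using w pm e by (simp add: dist_real_def)
      qed
    qed
    show ?thesis using left right m_def by simp
  qed
  show ?thesis using P1 P2 P3 by blast
qed


end
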